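(* Let $N\ge 2$ and $0<\gamma_1\le\gamma_2\le\dots\le\gamma_N$ with $\gamma_i+\frac{\gamma_i}{\gamma_i+\gamma_j}\ge 1$ for all distinct $i,j$. Among all spanning trees $T$ on $\{1,\dots,N\}$, the star $S$ centered at vertex $1$ (edges $\{1,j\}$ for $j=2,\dots,N$) maximizes $R_{\mathrm s}(T)$, and $$R_{\mathrm s}(S)=\frac{1}{2(N-1)}\log_2\!\Big(\Big(\gamma_1+\frac{\gamma_1}{\gamma_1+\gamma_N}\Big)\prod_{i=2}^{N}\Big(\gamma_i+\frac{\gamma_i}{\gamma_i+\gamma_1}\Big)\Big).$$
   Context: For distinct $i,j$ put $\varphi(i,j)=\log_2\!\big(\gamma_i+\frac{\gamma_i}{\gamma_i+\gamma_j}\big)$. For a spanning tree $T$ on $\{1,\dots,N\}$ with neighbor sets $A_i^T$, define the sum rate $$R_{\mathrm s}(T)=\frac{1}{2(N-1)}\sum_{i=1}^N \min_{j\in A_i^T}\varphi(i,j).$$ A spanning tree is called sum-rate optimal if it maximizes $R_{\mathrm s}$ over all spanning trees on $\{1,\dots,N\}$. *)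

theory Defs
  imports Complex_Main
begin

definition edges_on :: "nat \<Rightarrow> nat set set" where
  "edges_on N = {e. \<exists>i j. e = {i, j} \<and> i \<noteq> j \<and> i \<in> {1..N} \<and> j \<in> {1..N}}"

definition adj_rel :: "nat set set \<Rightarrow> (nat \<times> nat) set" where
  "adj_rel T = {(i, j). {i, j} \<in> T \<and> i \<noteq> j}"

definition is_spanning_tree :: "nat \<Rightarrow> nat set set \<Rightarrow> bool" where
  "is_spanning_tree N T \<longleftrightarrow> T \<subseteq> edges_on N \<and> card T = N - 1 \<and>
     (\<forall>i\<in>{1..N}. \<forall>j\<in>{1..N}. (i, j) \<in> (adj_rel T)\<^sup>*)"

definition nbrs :: "nat set set \<Rightarrow> nat \<Rightarrow> nat set" where
  "nbrs T i = {j. j \<noteq> i \<and> {i, j} \<in> T}"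

definition phi :: "(nat \<Rightarrow> real) \<Rightarrow> nat \<Rightarrow> nat \<Rightarrow> real" where
  "phi \<gamma> i j = log 2 (\<gamma> i + \<gamma> i / (\<gamma> i + \<gamma> j))"

definition sum_rate :: "(nat \<Rightarrow> real) \<Rightarrow> nat \<Rightarrow> nat set set \<Rightarrow> real" where
  "sum_rate \<gamma> N T = 1 / (2 * (real N - 1)) *
     (\<Sum>i\<in>{1..N}. Min ((\<lambda>j. phi \<gamma> i j) ` nbrs T i))"

definition star1 :: "nat \<Rightarrow> nat set set" where
  "star1 N = {{1, j} | j. j \<in> {2..N}}"

end

theory Submission
  imports Defs "HOL-Library.Transitive_Closure_Table"
begin

fun chainsum :: "(nat \<Rightarrow> nat \<Rightarrow> real) \<Rightarrow> nat \<Rightarrow> nat list \<Rightarrow> real" where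
  "chainsum f x [] = 0"
| "chainsum f x (y # ys) = f x y + chainsum f y ys"

lemma chainsum_snoc: "chainsum f x (ys @ [z]) = chainsum f x ys + f (last (x # ys)) z"
  by (induction ys arbitrary: x) auto

lemma path_sum:
  assumes "rtrancl_path r x ys z" and "\<And>a b. r a b \<Longrightarrow> t a \<le> f a b"
  shows "sum_list (map t (butlast (x # ys))) \<le> chainsum f x ys"
  using assms(1)
proof (induction rule: rtrancl_path.induct)
  case (base x) then show ?case by simp
next
  case (step x y ys z)
  then show ?case using assms(2)[of x y] by (cases ys) auto
qed

lemma path_range:
  assumes "rtrancl_path r x ys z" and "\<And>a b. r a b \<Longrightarrow> P b"
  shows "\<forall>v\<in>set ys. P v"
  using assms(1) by (induction rule: rtrancl_path.induct) (auto intro: assms(2))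

lemma three_ineq:
  fixes a b c :: real
  assumes "0 < a" "a \<le> b" "a \<le> c"
  shows "(a + a/(a+b)) * (b + b/(b+c)) \<le> (a + a/(a+c)) * (b + b/(b+a))"
proof -
  have b: "0 < b" "0 < c" using assms by auto
  have e1: "a + a/(a+b) = a*(a+b+1)/(a+b)" using assms b by (simp add: field_simps)
  have e2: "b + b/(b+c) = b*(b+c+1)/(b+c)" using assms b by (simp add: field_simps)
  have e3: "a + a/(a+c) = a*(a+c+1)/(a+c)" using assms b by (simp add: field_simps)
  have e4: "b + b/(b+a) = b*(a+b+1)/(a+b)" using assms b by (simp add: field_simps)
  have k: "(b+c+1)/(b+c) \<le> (a+c+1)/(a+c)"
  proof -
    have "(b+c+1)/(b+c) = 1 + 1/(b+c)" using b by (simp add: field_simps)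
    also have "\<dots> \<le> 1 + 1/(a+c)" using assms b by (simp add: frac_le)
    also have "\<dots> = (a+c+1)/(a+c)" using assms b by (simp add: field_simps)
    finally show ?thesis .
  qed
  have p: "0 \<le> a*(a+b+1)/(a+b) * b" using assms b by simp
  have "(a + a/(a+b)) * (b + b/(b+c)) = (a*(a+b+1)/(a+b) * b) * ((b+c+1)/(b+c))"
    using e1 e2 by simp
  also have "\<dots> \<le> (a*(a+b+1)/(a+b) * b) * ((a+c+1)/(a+c))"
    using k p by (rule mult_left_mono)
  also have "\<dots> = (a + a/(a+c)) * (b + b/(b+a))"
    unfolding e3 e4 using assms b by (simp add: field_simps)
  finally show ?thesis .
qed

theorem theorem3:
  fixes N :: nat and \<gamma> :: "nat \<Rightarrow> real"
  assumes "N \<ge> 2"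
    and "0 < \<gamma> 1"
    and "\<And>i. 1 \<le> i \<Longrightarrow> i < N \<Longrightarrow> \<gamma> i \<le> \<gamma> (i + 1)"
    and "\<And>i j. i \<in> {1..N} \<Longrightarrow> j \<in> {1..N} \<Longrightarrow> i \<noteq> j \<Longrightarrow>
           \<gamma> i + \<gamma> i / (\<gamma> i + \<gamma> j) \<ge> 1"
  shows "is_spanning_tree N (star1 N)
    \<and> (\<forall>T. is_spanning_tree N T \<longrightarrow> sum_rate \<gamma> N T \<le> sum_rate \<gamma> N (star1 N))
    \<and> sum_rate \<gamma> N (star1 N) = 1 / (2 * (real N - 1)) *
        log 2 ((\<gamma> 1 + \<gamma> 1 / (\<gamma> 1 + \<gamma> N)) *
               (\<Prod>i\<in>{2..N}. \<gamma> i + \<gamma> i / (\<gamma> i + \<gamma> 1)))"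
proof -
  have mono: "\<gamma> i \<le> \<gamma> j" if "1 \<le> i" "i \<le> j" "j \<le> N" for i j
    using that
  proof (induction j)
    case 0 then show ?case by simp
  next
    case (Suc j)
    show ?case
    proof (cases "i = Suc j")
      case True then show ?thesis by simp
    next
      case False
      then have "\<gamma> i \<le> \<gamma> j" using Suc by simp
      also have "\<gamma> j \<le> \<gamma> (j + 1)" using Suc False assms(3)[of j] by simp
      finally show ?thesis by simp
    qed
  qed
  have g1: "\<gamma> 1 \<le> \<gamma> i" if "i \<in> {1..N}" for i using mono[of 1 i] that by auto
  have pos: "0 < \<gamma> i" if "i \<in> {1..N}" for i using g1[OF that] assms(2) by linarith
  define g where "g i j = \<gamma> i + \<gamma> i / (\<gamma> i + \<gamma> j)" for i j
  have gpos: "0 < g i j" if "i \<in> {1..N}" "j \<in> {1..N}" for i j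
    using pos[OF that(1)] pos[OF that(2)] unfolding g_def by (simp add: add_pos_pos)
  have phig: "phi \<gamma> i j = log 2 (g i j)" for i j unfolding phi_def g_def by simp
  have phimono: "phi \<gamma> i k \<le> phi \<gamma> i j" if "i \<in> {1..N}" "j \<in> {1..N}" "k \<in> {1..N}" "\<gamma> j \<le> \<gamma> k" for i j k
  proof -
    have "\<gamma> i / (\<gamma> i + \<gamma> k) \<le> \<gamma> i / (\<gamma> i + \<gamma> j)"
      using pos[OF that(1)] pos[OF that(2)] that(4)
      by (intro divide_left_mono) (auto simp: add_pos_pos)
    then have "g i k \<le> g i j" unfolding g_def by simp
    then show ?thesis unfolding phig using gpos that by simp
  qed
  have three: "phi \<gamma> 1 w + phi \<gamma> w z \<le> phi \<gamma> 1 z + phi \<gamma> w 1"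
    if "w \<in> {1..N}" "z \<in> {1..N}" for w z
  proof -
    have one: "(1::nat) \<in> {1..N}" using assms(1) by simp
    have "g 1 w * g w z \<le> g 1 z * g w 1"
      unfolding g_def using three_ineq[OF assms(2) g1[OF that(1)] g1[OF that(2)]] by simp
    then have "log 2 (g 1 w * g w z) \<le> log 2 (g 1 z * g w 1)"
      using gpos one that by (simp add: mult_pos_pos)
    then show ?thesis unfolding phig using gpos one that by (simp add: log_mult_pos)
  qed
  have chain: "\<forall>z\<in>{1..N}. chainsum (phi \<gamma>) 1 (ws @ [z]) \<le> phi \<gamma> 1 z + sum_list (map (\<lambda>v. phi \<gamma> v 1) ws)"
    if "set ws \<subseteq> {1..N}" for ws
    using that
  proof (induction ws rule: rev_induct)
    case Nil then show ?case by simp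
  next
    case (snoc w ws)
    show ?case
    proof
      fix z assume z: "z \<in> {1..N}"
      have w: "w \<in> {1..N}" using snoc by simp
      have "chainsum (phi \<gamma>) 1 ((ws @ [w]) @ [z]) = chainsum (phi \<gamma>) 1 (ws @ [w]) + phi \<gamma> w z"
        using chainsum_snoc[of "phi \<gamma>" 1 "ws @ [w]" z] by simp
      also have "\<dots> \<le> phi \<gamma> 1 w + sum_list (map (\<lambda>v. phi \<gamma> v 1) ws) + phi \<gamma> w z"
        using snoc w by simp
      also have "\<dots> \<le> phi \<gamma> 1 z + sum_list (map (\<lambda>v. phi \<gamma> v 1) (ws @ [w]))"
        using three[OF w z] by simp
      finally show "chainsum (phi \<gamma>) 1 ((ws @ [w]) @ [z]) \<le> phi \<gamma> 1 z + sum_list (map (\<lambda>v. phi \<gamma> v 1) (ws @ [w]))" .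
    qed
  qed
  have Npos: "0 < 1 / (2 * (real N - 1))" using assms(1) by simp
  have nb1: "nbrs (star1 N) 1 = {2..N}" unfolding nbrs_def star1_def by (auto simp: doubleton_eq_iff)
  have nbi: "nbrs (star1 N) i = {1}" if "i \<in> {2..N}" for i
    using that unfolding nbrs_def star1_def by (auto simp: doubleton_eq_iff)
  have Min1: "Min (phi \<gamma> 1 ` {2..N}) = phi \<gamma> 1 N"
  proof (rule Min_eqI)
    show "phi \<gamma> 1 N \<in> phi \<gamma> 1 ` {2..N}" using assms(1) by simp
    fix y assume "y \<in> phi \<gamma> 1 ` {2..N}"
    then obtain j where j: "j \<in> {2..N}" "y = phi \<gamma> 1 j" by auto
    show "phi \<gamma> 1 N \<le> y" using j phimono[of 1 j N] mono[of j N] assms(1) by auto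
  qed simp
  have star_sum: "sum_rate \<gamma> N (star1 N) = 1 / (2 * (real N - 1)) * (phi \<gamma> 1 N + (\<Sum>i\<in>{2..N}. phi \<gamma> i 1))"
  proof -
    have "{1..N} = insert 1 {2..N}" using assms(1) by auto
    then have "(\<Sum>i\<in>{1..N}. Min ((\<lambda>j. phi \<gamma> i j) ` nbrs (star1 N) i))
       = Min ((\<lambda>j. phi \<gamma> 1 j) ` nbrs (star1 N) 1) + (\<Sum>i\<in>{2..N}. Min ((\<lambda>j. phi \<gamma> i j) ` nbrs (star1 N) i))"
      by simp
    also have "\<dots> = phi \<gamma> 1 N + (\<Sum>i\<in>{2..N}. phi \<gamma> i 1)"
      using nb1 Min1 nbi by simp
    finally show ?thesis unfolding sum_rate_def by simp
  qed
  have formula: "phi \<gamma> 1 N + (\<Sum>i\<in>{2..N}. phi \<gamma> i 1) =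
      log 2 ((\<gamma> 1 + \<gamma> 1 / (\<gamma> 1 + \<gamma> N)) * (\<Prod>i\<in>{2..N}. \<gamma> i + \<gamma> i / (\<gamma> i + \<gamma> 1)))"
  proof -
    have one: "(1::nat) \<in> {1..N}" "N \<in> {1..N}" using assms(1) by auto
    have pp: "0 < (\<Prod>i\<in>{2..N}. g i 1)" using gpos one by (intro prod_pos) auto
    have lp: "log 2 (\<Prod>i\<in>{2..N}. g i 1) = (\<Sum>i\<in>{2..N}. log 2 (g i 1))"
    proof -
      have "ln (\<Prod>i\<in>{2..N}. g i 1) = (\<Sum>i\<in>{2..N}. ln (g i 1))"
      proof (rule ln_prod)
        fix i assume "i \<in> {2..N}"
        then have "i \<in> {1..N}" by auto
        then show "g i 1 \<noteq> 0" using gpos[of i 1] one by simp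
      qed simp
      then show ?thesis unfolding log_def by (simp add: sum_divide_distrib)
    qed
    have "log 2 (g 1 N * (\<Prod>i\<in>{2..N}. g i 1)) = log 2 (g 1 N) + (\<Sum>i\<in>{2..N}. log 2 (g i 1))"
      using log_mult_pos[OF gpos[OF one(1) one(2)] pp] lp by simp
    then show ?thesis unfolding phig g_def by simp
  qed
  have span: "is_spanning_tree N (star1 N)"
  proof -
    have sub: "star1 N \<subseteq> edges_on N" unfolding star1_def edges_on_def
    proof (clarsimp)
      fix j :: nat assume "2 \<le> j" "j \<le> N"
      then show "\<exists>i ja. {Suc 0, j} = {i, ja} \<and> i \<noteq> ja \<and> Suc 0 \<le> i \<and> i \<le> N \<and> Suc 0 \<le> ja \<and> ja \<le> N"
        by (rule_tac x="Suc 0" in exI, rule_tac x=j in exI) auto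
    qed
    have im: "star1 N = (\<lambda>j. {1, j}) ` {2..N}" unfolding star1_def by auto
    have inj: "inj_on (\<lambda>j. {1::nat, j}) {2..N}" by (auto simp: inj_on_def doubleton_eq_iff)
    have card: "card (star1 N) = N - 1" unfolding im using card_image[OF inj] by simp
    have to1: "(i, 1) \<in> (adj_rel (star1 N))\<^sup>*" if "i \<in> {1..N}" for i
    proof (cases "i = 1")
      case False
      have e: "{i, 1} = {1, i}" by (rule insert_commute)
      have "{1, i} \<in> star1 N" using that False unfolding star1_def by auto
      then have "{i, 1} \<in> star1 N" by (subst insert_commute)
      then have "(i, 1) \<in> adj_rel (star1 N)" using False unfolding adj_rel_def by simp
      then show ?thesis by blast
    qed simp
    have from1: "(1, i) \<in> (adj_rel (star1 N))\<^sup>*" if "i \<in> {1..N}" for i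
    proof (cases "i = 1")
      case False
      then have "(1, i) \<in> adj_rel (star1 N)" using that unfolding adj_rel_def star1_def
        by auto
      then show ?thesis by blast
    qed simp
    have "\<forall>i\<in>{1..N}. \<forall>j\<in>{1..N}. (i, j) \<in> (adj_rel (star1 N))\<^sup>*"
      using to1 from1 by (blast intro: rtrancl_trans)
    then show ?thesis unfolding is_spanning_tree_def using sub card by blast
  qed
  have opt: "sum_rate \<gamma> N T \<le> sum_rate \<gamma> N (star1 N)" if T: "is_spanning_tree N T" for T
  proof -
    define t where "t v = Min ((\<lambda>j. phi \<gamma> v j) ` nbrs T v)" for v
    have Tsub: "T \<subseteq> edges_on N" using T unfolding is_spanning_tree_def by simp
    have nbsub: "nbrs T v \<subseteq> {1..N}" for v
    proof
      fix j assume "j \<in> nbrs T v"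
      then have "{v, j} \<in> edges_on N" using Tsub unfolding nbrs_def by auto
      then show "j \<in> {1..N}" unfolding edges_on_def by (auto simp: doubleton_eq_iff)
    qed
    have finnb: "finite (nbrs T v)" for v using nbsub finite_subset by blast
    have adjnb: "b \<in> nbrs T a" if "(a, b) \<in> adj_rel T" for a b
      using that unfolding adj_rel_def nbrs_def by auto
    have tle: "t a \<le> phi \<gamma> a b" if "(a, b) \<in> adj_rel T" for a b
      unfolding t_def using adjnb[OF that] finnb by simp
    have adjin: "b \<in> {1..N}" if "(a, b) \<in> adj_rel T" for a b
      using adjnb[OF that] nbsub by blast
    have conn: "(i, j) \<in> (adj_rel T)\<^sup>*" if "i \<in> {1..N}" "j \<in> {1..N}" for i j
      using T that unfolding is_spanning_tree_def by blast
    have tle1: "t v \<le> phi \<gamma> v 1" if v: "v \<in> {1..N}" "v \<noteq> 1" for v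
    proof -
      have "(v, 1) \<in> (adj_rel T)\<^sup>*" using conn v assms(1) by simp
      then obtain y where "(v, y) \<in> adj_rel T" using v(2) by (cases rule: converse_rtranclE) auto
      then have ne: "nbrs T v \<noteq> {}" using adjnb by blast
      have "t v \<in> (\<lambda>j. phi \<gamma> v j) ` nbrs T v" unfolding t_def using ne finnb by (intro Min_in) auto
      then obtain j where j: "j \<in> nbrs T v" "t v = phi \<gamma> v j" by auto
      have "j \<in> {1..N}" using j nbsub by blast
      then show ?thesis using j phimono[of v 1 j] v g1 assms(1) by auto
    qed
    have "(1, N) \<in> (adj_rel T)\<^sup>*" using conn assms(1) by simp
    then have "(\<lambda>a b. (a, b) \<in> adj_rel T)\<^sup>*\<^sup>* 1 N" by (simp add: rtranclp_rtrancl_eq)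
    then obtain ys0 where "rtrancl_path (\<lambda>a b. (a, b) \<in> adj_rel T) 1 ys0 N"
      by (auto simp: rtranclp_eq_rtrancl_path)
    then obtain ys where P: "rtrancl_path (\<lambda>a b. (a, b) \<in> adj_rel T) 1 ys N"
      and D: "distinct (1 # ys)" by (rule rtrancl_path_distinct)
    have ysne: "ys \<noteq> []" using P assms(1) by (cases rule: rtrancl_path.cases) auto
    have lst: "last ys = N" using rtrancl_path_last[OF P ysne] .
    define ws where "ws = butlast ys"
    have ysw: "ys = ws @ [N]" unfolding ws_def using ysne lst by (metis append_butlast_last_id)
    have ysin: "\<forall>v\<in>set ys. v \<in> {1..N}"
      using path_range[OF P, of "\<lambda>v. v \<in> {1..N}"] adjin by blast
    have wsin: "set ws \<subseteq> {1..N}" using ysin ysw by auto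
    have D2: "distinct (1 # ws)" "1 \<notin> set ws" "N \<notin> set ws" using D ysw by auto
    have ps: "sum_list (map t (butlast (1 # ys))) \<le> chainsum (phi \<gamma>) 1 ys"
      using path_sum[OF P, of t "phi \<gamma>"] tle by blast
    have bl: "butlast (1 # ys) = 1 # ws" using ysw by simp
    have A: "(\<Sum>v\<in>insert 1 (set ws). t v) \<le> phi \<gamma> 1 N + (\<Sum>v\<in>set ws. phi \<gamma> v 1)"
    proof -
      have "(\<Sum>v\<in>insert 1 (set ws). t v) = sum_list (map t (1 # ws))"
        using D2 by (simp add: sum_list_distinct_conv_sum_set)
      also have "\<dots> \<le> chainsum (phi \<gamma>) 1 ys" using ps bl by simp
      also have "\<dots> \<le> phi \<gamma> 1 N + sum_list (map (\<lambda>v. phi \<gamma> v 1) ws)"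
        using chain[OF wsin] assms(1) ysw by auto
      also have "\<dots> = phi \<gamma> 1 N + (\<Sum>v\<in>set ws. phi \<gamma> v 1)"
        using D2 by (simp add: sum_list_distinct_conv_sum_set)
      finally show ?thesis .
    qed
    define R where "R = {1..N} - insert 1 (set ws)"
    have B: "(\<Sum>v\<in>R. t v) \<le> (\<Sum>v\<in>R. phi \<gamma> v 1)"
      by (rule sum_mono) (use tle1 in \<open>auto simp: R_def\<close>)
    have one: "(1::nat) \<in> {1..N}" using assms(1) by simp
    have split1: "{1..N} = insert 1 (set ws) \<union> R" "insert 1 (set ws) \<inter> R = {}"
      unfolding R_def using wsin one by auto
    have split2: "{2..N} = set ws \<union> R" "set ws \<inter> R = {}"
    proof -
      have "2 \<le> x \<and> x \<le> N" if "x \<in> set ws" for x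
      proof -
        have "x \<in> {1..N}" using that wsin by blast
        moreover have "x \<noteq> 1" using that D2 by blast
        ultimately show ?thesis by auto
      qed
      then show "{2..N} = set ws \<union> R" "set ws \<inter> R = {}" unfolding R_def by auto
    qed
    have "(\<Sum>v\<in>{1..N}. t v) = (\<Sum>v\<in>insert 1 (set ws). t v) + (\<Sum>v\<in>R. t v)"
    proof -
      have fR: "finite R" unfolding R_def by simp
      have "(\<Sum>v\<in>{1..N}. t v) = (\<Sum>v\<in>insert 1 (set ws) \<union> R. t v)" using split1(1) by simp
      also have "\<dots> = (\<Sum>v\<in>insert 1 (set ws). t v) + (\<Sum>v\<in>R. t v)"
        using fR split1(2) by (intro sum.union_disjoint) auto
      finally show ?thesis .
    qed
    also have "\<dots> \<le> phi \<gamma> 1 N + ((\<Sum>v\<in>set ws. phi \<gamma> v 1) + (\<Sum>v\<in>R. phi \<gamma> v 1))"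
      using A B by simp
    also have "\<dots> = phi \<gamma> 1 N + (\<Sum>v\<in>{2..N}. phi \<gamma> v 1)"
    proof -
      have fR: "finite R" unfolding R_def by simp
      have "(\<Sum>v\<in>{2..N}. phi \<gamma> v 1) = (\<Sum>v\<in>set ws \<union> R. phi \<gamma> v 1)" using split2(1) by simp
      also have "\<dots> = (\<Sum>v\<in>set ws. phi \<gamma> v 1) + (\<Sum>v\<in>R. phi \<gamma> v 1)"
        using fR split2(2) by (intro sum.union_disjoint) auto
      finally show ?thesis by simp
    qed
    finally have "(\<Sum>v\<in>{1..N}. t v) \<le> phi \<gamma> 1 N + (\<Sum>v\<in>{2..N}. phi \<gamma> v 1)" .
    then have "1 / (2 * (real N - 1)) * (\<Sum>v\<in>{1..N}. t v) \<le> 1 / (2 * (real N - 1)) * (phi \<gamma> 1 N + (\<Sum>v\<in>{2..N}. phi \<gamma> v 1))"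
      using Npos by (intro mult_left_mono) auto
    moreover have "sum_rate \<gamma> N T = 1 / (2 * (real N - 1)) * (\<Sum>v\<in>{1..N}. t v)"
      unfolding sum_rate_def t_def by simp
    ultimately show ?thesis using star_sum by simp
  qed
  show ?thesis using span opt star_sum formula by simp
qed

end
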